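(* Let $p\geq 0$ be an integer, $T$ a tree, $H$ a connected graph with at least $p$ vertices, and $V\subseteq V(T(H))$ with $|OC(T,V)|\geq p$ and $V(T)\setminus OC(T,V)\neq\emptyset$. Then $T(H)$ has a matching of size $p$ each of whose edges has one end in $V$ and the other end outside $V$.
   Context: Graph $T(H)$: for a tree $T$ and a graph $H$ with $V(H)=\{1,\dots,m\}$, $T(H)$ has vertices $v^i$ ($v\in V(T)$, $1\le i\le m$); for each $v$, $v^1,\dots,v^m$ span a copy $H^v$ of $H$; and $u^iv^i$ is an edge for each $i$ whenever $uv\in E(T)$. $OC(T,V)=\{u\in V(T): V(H^u)\cap V\neq\emptyset\}$. *)

theory Defs
  imports Main
begin

type_synonym 'a ugraph = "'a set \<times> 'a set set"

definition verts :: "'a ugraph \<Rightarrow> 'a set" where "verts G = fst G"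
definition edges :: "'a ugraph \<Rightarrow> 'a set set" where "edges G = snd G"

definition graph :: "'a ugraph \<Rightarrow> bool" where
  "graph G \<longleftrightarrow> finite (verts G) \<and>
     (\<forall>e\<in>edges G. \<exists>u v. e = {u, v} \<and> u \<noteq> v \<and> u \<in> verts G \<and> v \<in> verts G)"

definition adj :: "'a ugraph \<Rightarrow> 'a \<Rightarrow> 'a \<Rightarrow> bool" where
  "adj G u v \<longleftrightarrow> {u, v} \<in> edges G"

definition connected :: "'a ugraph \<Rightarrow> bool" where
  "connected G \<longleftrightarrow> (\<forall>u\<in>verts G. \<forall>v\<in>verts G. (u, v) \<in> {(x, y). adj G x y}\<^sup>*)"

definition is_cycle :: "'a ugraph \<Rightarrow> 'a list \<Rightarrow> bool" where
  "is_cycle G cs \<longleftrightarrow> length cs \<ge> 3 \<and> distinct cs \<and> set cs \<subseteq> verts G \<and>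
     (\<forall>i < length cs - 1. adj G (cs ! i) (cs ! Suc i)) \<and> adj G (last cs) (hd cs)"

definition acyclic_graph :: "'a ugraph \<Rightarrow> bool" where
  "acyclic_graph G \<longleftrightarrow> (\<nexists>cs. is_cycle G cs)"

definition tree :: "'a ugraph \<Rightarrow> bool" where
  "tree T \<longleftrightarrow> graph T \<and> verts T \<noteq> {} \<and> connected T \<and> acyclic_graph T"

text \<open>The graph T(H), for H with vertex set {1..m}: vertex v^i is the pair (v, i).\<close>
definition TH :: "'a ugraph \<Rightarrow> nat ugraph \<Rightarrow> ('a \<times> nat) ugraph" where
  "TH T H = (verts T \<times> verts H,
     {{(v, i), (v, j)} | v i j. v \<in> verts T \<and> {i, j} \<in> edges H} \<union>
     {{(u, i), (v, i)} | u v i. {u, v} \<in> edges T \<and> i \<in> verts H})"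

definition OC :: "'a ugraph \<Rightarrow> ('a \<times> nat) set \<Rightarrow> 'a set" where
  "OC T V = {u \<in> verts T. \<exists>i. (u, i) \<in> V}"

definition matching :: "'a ugraph \<Rightarrow> 'a set set \<Rightarrow> bool" where
  "matching G M \<longleftrightarrow> M \<subseteq> edges G \<and> (\<forall>e\<in>M. \<forall>f\<in>M. e \<noteq> f \<longrightarrow> e \<inter> f = {})"

end

theory Submission
  imports Defs
begin

lemma cross_edge:
  assumes "(a,b) \<in> {(x,y). R x y}\<^sup>*" "P a" "\<not> P b"
  shows "\<exists>x y. R x y \<and> P x \<and> \<not> P y"
  using assms by (induction rule: rtrancl_induct) auto

theorem lemma7:
  fixes p m :: nat and T :: "'a ugraph" and H :: "nat ugraph" and V :: "('a \<times> nat) set"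
  assumes "tree T"
    and "graph H" and "verts H = {1..m}" and "connected H" and "m \<ge> p"
    and "V \<subseteq> verts (TH T H)"
    and "card (OC T V) \<ge> p"
    and "verts T - OC T V \<noteq> {}"
  shows "\<exists>M. matching (TH T H) M \<and> card M = p \<and> finite M \<and>
             (\<forall>e\<in>M. card (e \<inter> V) = 1)"
proof -
  define J where "J = {j \<in> verts H. \<exists>u. (u,j) \<in> V}"
  have VT: "V \<subseteq> verts T \<times> verts H" using assms(6) by (simp add: TH_def verts_def)
  have ET: "edges (TH T H) = {{(v, i), (v, j)} | v i j. v \<in> verts T \<and> {i, j} \<in> edges H} \<union>
     {{(u, i), (v, i)} | u v i. {u, v} \<in> edges T \<and> i \<in> verts H}"
    by (simp add: TH_def edges_def)
  obtain z where z: "z \<in> verts T" "z \<notin> OC T V" using assms(8) by blast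
  then have zV: "\<forall>i. (z,i) \<notin> V" by (auto simp: OC_def)
  have cT: "connected T" using assms(1) by (simp add: tree_def)
  have finH: "finite (verts H)" using assms(3) by simp
  have finJ: "finite J" using finH by (simp add: J_def)
  show ?thesis
  proof (cases "p \<le> card J")
    case True
    obtain J' where J': "J' \<subseteq> J" "card J' = p" using obtain_subset_with_card_n[OF True] by blast
    have "\<forall>j\<in>J. \<exists>x y. {x,y} \<in> edges T \<and> (x,j) \<in> V \<and> (y,j) \<notin> V"
    proof
      fix j assume "j \<in> J"
      then obtain a where a: "(a,j) \<in> V" by (auto simp: J_def)
      then have "a \<in> verts T" using VT by auto
      then have "(a,z) \<in> {(x,y). adj T x y}\<^sup>*" using cT z by (auto simp: connected_def)
      from cross_edge[OF this, of "\<lambda>x. (x,j) \<in> V"] show "\<exists>x y. {x,y} \<in> edges T \<and> (x,j) \<in> V \<and> (y,j) \<notin> V"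
        using zV a by (auto simp: adj_def)
    qed
    then have Q: "\<forall>j\<in>J. \<exists>q. {fst q, snd q} \<in> edges T \<and> (fst q, j) \<in> V \<and> (snd q, j) \<notin> V"
      by (metis fst_conv snd_conv)
    obtain g where g: "\<forall>j\<in>J. {fst (g j), snd (g j)} \<in> edges T \<and> (fst (g j), j) \<in> V \<and> (snd (g j), j) \<notin> V"
      using bchoice[OF Q] by blast
    define fx where "fx = (\<lambda>j. fst (g j))"
    define fy where "fy = (\<lambda>j. snd (g j))"
    have F: "\<forall>j\<in>J. {fx j, fy j} \<in> edges T \<and> (fx j, j) \<in> V \<and> (fy j, j) \<notin> V"
      using g by (simp add: fx_def fy_def)
    define M where "M = (\<lambda>j. {(fx j, j), (fy j, j)}) ` J'"
    have inj: "inj_on (\<lambda>j. {(fx j, j), (fy j, j)}) J'"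
    proof (rule inj_onI)
      fix j k assume "{(fx j, j), (fy j, j)} = {(fx k, k), (fy k, k)}"
      then have "(fx j, j) \<in> {(fx k, k), (fy k, k)}" by blast
      then show "j = k" by auto
    qed
    have finJ': "finite J'" using J' finJ finite_subset by blast
    have "matching (TH T H) M"
      unfolding matching_def
    proof
      show "M \<subseteq> edges (TH T H)"
      proof
        fix e assume "e \<in> M"
        then obtain j where j: "j \<in> J'" "e = {(fx j, j), (fy j, j)}" by (auto simp: M_def)
        then have "j \<in> J" using J' by blast
        then have "{fx j, fy j} \<in> edges T" "j \<in> verts H" using F by (auto simp: J_def)
        then show "e \<in> edges (TH T H)" unfolding ET using j by blast
      qed
      show "\<forall>e\<in>M. \<forall>f\<in>M. e \<noteq> f \<longrightarrow> e \<inter> f = {}"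
      proof (intro ballI impI)
        fix e f assume "e \<in> M" "f \<in> M" "e \<noteq> f"
        then obtain j k where "e = {(fx j, j), (fy j, j)}" "f = {(fx k, k), (fy k, k)}"
          unfolding M_def by blast
        moreover have "j \<noteq> k" using calculation \<open>e \<noteq> f\<close> by blast
        ultimately show "e \<inter> f = {}" by blast
      qed
    qed
    moreover have "card M = p" using J' inj by (simp add: M_def card_image)
    moreover have "finite M" using finJ' by (simp add: M_def)
    moreover have "\<forall>e\<in>M. card (e \<inter> V) = 1"
    proof
      fix e assume "e \<in> M"
      then obtain j where j: "j \<in> J'" "e = {(fx j, j), (fy j, j)}" by (auto simp: M_def)
      then have "j \<in> J" using J' by blast
      then have "(fx j, j) \<in> V" "(fy j, j) \<notin> V" using F by auto
      then have "e \<inter> V = {(fx j, j)}" using j by auto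
      then show "card (e \<inter> V) = 1" by simp
    qed
    ultimately show ?thesis by blast
  next
    case False
    have JH: "J \<subseteq> verts H" by (auto simp: J_def)
    have cH: "card (verts H) = m" using assms(3) by simp
    obtain b where b: "b \<in> verts H" "b \<notin> J"
    proof -
      have "\<not> verts H \<subseteq> J"
      proof
        assume "verts H \<subseteq> J"
        then have "card (verts H) \<le> card J" using finJ card_mono by blast
        then show False using False cH assms(5) by linarith
      qed
      then show ?thesis using that by blast
    qed
    then have bV: "\<forall>u. (u,b) \<notin> V" by (auto simp: J_def)
    have "\<forall>u\<in>OC T V. \<exists>c d. {c,d} \<in> edges H \<and> (u,c) \<in> V \<and> (u,d) \<notin> V"
    proof
      fix u assume "u \<in> OC T V"
      then obtain a where a: "(u,a) \<in> V" by (auto simp: OC_def)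
      then have "a \<in> verts H" using VT by auto
      then have "(a,b) \<in> {(x,y). adj H x y}\<^sup>*" using assms(4) b by (auto simp: connected_def)
      from cross_edge[OF this, of "\<lambda>x. (u,x) \<in> V"] show "\<exists>c d. {c,d} \<in> edges H \<and> (u,c) \<in> V \<and> (u,d) \<notin> V"
        using bV a by (auto simp: adj_def)
    qed
    then have Q2: "\<forall>u\<in>OC T V. \<exists>q. {fst q, snd q} \<in> edges H \<and> (u, fst q) \<in> V \<and> (u, snd q) \<notin> V"
      by (metis fst_conv snd_conv)
    obtain g where g: "\<forall>u\<in>OC T V. {fst (g u), snd (g u)} \<in> edges H \<and> (u, fst (g u)) \<in> V \<and> (u, snd (g u)) \<notin> V"
      using bchoice[OF Q2] by blast
    define fc where "fc = (\<lambda>u. fst (g u))"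
    define fd where "fd = (\<lambda>u. snd (g u))"
    have F: "\<forall>u\<in>OC T V. {fc u, fd u} \<in> edges H \<and> (u, fc u) \<in> V \<and> (u, fd u) \<notin> V"
      using g by (simp add: fc_def fd_def)
    obtain S where S: "S \<subseteq> OC T V" "card S = p" using obtain_subset_with_card_n[OF assms(7)] by blast
    have "p > 0" using False by linarith
    then have finS: "finite S" using S card_ge_0_finite by auto
    define M where "M = (\<lambda>u. {(u, fc u), (u, fd u)}) ` S"
    have inj: "inj_on (\<lambda>u. {(u, fc u), (u, fd u)}) S"
    proof (rule inj_onI)
      fix j k assume "{(j, fc j), (j, fd j)} = {(k, fc k), (k, fd k)}"
      then have "(j, fc j) \<in> {(k, fc k), (k, fd k)}" by blast
      then show "j = k" by auto
    qed
    have "matching (TH T H) M"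
      unfolding matching_def
    proof
      show "M \<subseteq> edges (TH T H)"
      proof
        fix e assume "e \<in> M"
        then obtain u where u: "u \<in> S" "e = {(u, fc u), (u, fd u)}" by (auto simp: M_def)
        then have "u \<in> OC T V" using S by blast
        then have "{fc u, fd u} \<in> edges H" "u \<in> verts T" using F by (auto simp: OC_def)
        then show "e \<in> edges (TH T H)" unfolding ET using u by blast
      qed
      show "\<forall>e\<in>M. \<forall>f\<in>M. e \<noteq> f \<longrightarrow> e \<inter> f = {}"
      proof (intro ballI impI)
        fix e f assume "e \<in> M" "f \<in> M" "e \<noteq> f"
        then obtain j k where "e = {(j, fc j), (j, fd j)}" "f = {(k, fc k), (k, fd k)}"
          unfolding M_def by blast
        moreover have "j \<noteq> k" using calculation \<open>e \<noteq> f\<close> by blast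
        ultimately show "e \<inter> f = {}" by blast
      qed
    qed
    moreover have "card M = p" using S inj by (simp add: M_def card_image)
    moreover have "finite M" using finS by (simp add: M_def)
    moreover have "\<forall>e\<in>M. card (e \<inter> V) = 1"
    proof
      fix e assume "e \<in> M"
      then obtain u where u: "u \<in> S" "e = {(u, fc u), (u, fd u)}" by (auto simp: M_def)
      then have "u \<in> OC T V" using S by blast
      then have "(u, fc u) \<in> V" "(u, fd u) \<notin> V" using F by auto
      then have "e \<inter> V = {(u, fc u)}" using u by auto
      then show "card (e \<inter> V) = 1" by simp
    qed
    ultimately show ?thesis by blast
  qed
qed

end
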